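(* Let $\Gamma\subset\mathbb{C}^*$ be a subgroup with the accumulation property, i.e. either $\Gamma$ contains an element $q$ with $|q|\ne1$, or $\Gamma$ contains a sequence $\gamma_n\to1$ in $\mathbb{C}^*$ with $\gamma_n\neq1$. If $R\in\mathbb{C}(z)$ and a homomorphism $\sigma:\Gamma\to\Gamma$ satisfy $R(\gamma z)=\sigma(\gamma)R(z)$ for all $\gamma\in\Gamma$, $z\in\mathbb{C}^*$, then $R(z)=cz^n$ for some $c\in\mathbb{C}^*$ and $n\in\mathbb{Z}$. *)

theory Defs
  imports "HOL-Analysis.Analysis" "HOL-Computational_Algebra.Polynomial"
begin

definition subgroup_Cstar :: "complex set \<Rightarrow> bool" where
  "subgroup_Cstar G \<longleftrightarrow> 0 \<notin> G \<and> 1 \<in> G \<and> (\<forall>x\<in>G. \<forall>y\<in>G. x * y \<in> G) \<and> (\<forall>x\<in>G. inverse x \<in> G)"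

definition accumulation_property :: "complex set \<Rightarrow> bool" where
  "accumulation_property G \<longleftrightarrow>
     (\<exists>q\<in>G. norm q \<noteq> 1) \<or>
     (\<exists>g :: nat \<Rightarrow> complex. (\<forall>n. g n \<in> G \<and> g n \<noteq> 1) \<and> g \<longlonglongrightarrow> 1)"

definition endo_hom :: "complex set \<Rightarrow> (complex \<Rightarrow> complex) \<Rightarrow> bool" where
  "endo_hom G \<sigma> \<longleftrightarrow> (\<forall>x\<in>G. \<sigma> x \<in> G) \<and> (\<forall>x\<in>G. \<forall>y\<in>G. \<sigma> (x * y) = \<sigma> x * \<sigma> y)"

text \<open>Evaluation of the rational function p/q at z (meaningful where q z is nonzero).\<close>
definition rat_eval :: "complex poly \<Rightarrow> complex poly \<Rightarrow> complex \<Rightarrow> complex" where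
  "rat_eval p q z = poly p z / poly q z"

end

theory Submission
  imports Defs "HOL-Computational_Algebra.Fundamental_Theorem_Algebra"
begin

lemma pcompose_power_h: "pcompose (p ^ n) r = (pcompose p r) ^ n"
  for p r :: "complex poly"
  by (induct n) (simp_all add: pcompose_mult pcompose_pCons one_pCons)

lemma pcompose_dil_ne0:
  fixes p :: "complex poly" assumes "p \<noteq> 0" "g \<noteq> 0"
  shows "pcompose p [:0, g:] \<noteq> 0"
  using pcompose_eq_0[of p "[:0,g:]"] assms by auto

lemma order_dil_ge:
  fixes p :: "complex poly" assumes "p \<noteq> 0" "g \<noteq> 0"
  shows "order (g * a) p \<le> order a (pcompose p [:0, g:])"
proof -
  define n where "n = order (g*a) p"
  obtain r where r: "p = [:-(g*a),1:]^n * r" using order_1[of "g*a" p] unfolding n_def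
    by (auto elim: dvdE)
  have e: "pcompose [:-(g*a),1:] [:0,g:] = smult g [:-a,1:]"
    by (simp add: pcompose_pCons algebra_simps)
  have "pcompose p [:0, g:] = (pcompose [:-(g*a),1:] [:0,g:])^n * pcompose r [:0,g:]"
    by (subst r) (simp only: pcompose_mult pcompose_power_h)
  also have "\<dots> = (smult g [:-a,1:])^n * pcompose r [:0,g:]"
    by (simp only: e)
  also have "\<dots> = [:-a,1:]^n * smult (g^n) (pcompose r [:0,g:])"
    by (simp only: smult_power mult_smult_left mult_smult_right)
  finally have "[:-a,1:]^n dvd pcompose p [:0, g:]" by (metis dvd_smult dvd_triv_left)
  then show ?thesis using order_divides pcompose_dil_ne0[OF assms] n_def by blast
qed

lemma order_dil:
  fixes p :: "complex poly" assumes "p \<noteq> 0" "g \<noteq> 0"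
  shows "order a (pcompose p [:0, g:]) = order (g * a) p"
proof -
  have 1: "order (g * a) p \<le> order a (pcompose p [:0, g:])" by (rule order_dil_ge[OF assms])
  have "order (inverse g * (g*a)) (pcompose p [:0, g:]) \<le> order (g*a) (pcompose (pcompose p [:0, g:]) [:0, inverse g:])"
    by (rule order_dil_ge) (use assms pcompose_dil_ne0 in auto)
  also have "pcompose (pcompose p [:0, g:]) [:0, inverse g:] = p"
    using assms by (simp add: pcompose_assoc[symmetric] pcompose_pCons)
  finally show ?thesis using 1 assms by (simp add: field_simps)
qed

lemma same_order_assoc:
  fixes p q :: "complex poly"
  shows "p \<noteq> 0 \<Longrightarrow> q \<noteq> 0 \<Longrightarrow> (\<forall>a. order a p = order a q) \<Longrightarrow> \<exists>c. c \<noteq> 0 \<and> p = smult c q"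
proof (induction "degree p" arbitrary: p q rule: less_induct)
  case less
  show ?case
  proof (cases "degree p = 0")
    case True
    have "\<not> (\<exists>z. poly q z = 0)"
    proof
      assume "\<exists>z. poly q z = 0"
      then obtain z where "poly q z = 0" by blast
      then have "order z q \<noteq> 0" using less.prems order_root by blast
      moreover have "order z p = 0" using True less.prems
        by (metis leD order_degree zero_less_iff_neq_zero)
      ultimately show False using less.prems by simp
    qed
    then have "degree q = 0" using fundamental_theorem_of_algebra constant_degree by blast
    then obtain c d where c: "p = [:c:]" "q = [:d:]" using True degree0_coeffs by metis
    then have "c \<noteq> 0" "d \<noteq> 0" using less.prems by auto
    then show ?thesis using c by (intro exI[of _ "c/d"]) auto
  next
    case False
    then obtain a where a: "poly p a = 0" using fundamental_theorem_of_algebra[of p] constant_degree[of p] by metis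
    then have "order a p \<noteq> 0" using less.prems order_root by blast
    then have "poly q a = 0" using less.prems order_root by metis
    obtain p' where p': "p = [:-a,1:] * p'" using a poly_eq_0_iff_dvd by (metis dvdE)
    obtain q' where q': "q = [:-a,1:] * q'" using \<open>poly q a = 0\<close> poly_eq_0_iff_dvd by (metis dvdE)
    have nz: "p' \<noteq> 0" "q' \<noteq> 0" using p' q' less.prems by auto
    have "\<forall>b. order b p' = order b q'"
    proof
      fix b
      have "order b p = order b [:-a,1:] + order b p'" using p' less.prems order_mult by metis
      moreover have "order b q = order b [:-a,1:] + order b q'" using q' less.prems order_mult by metis
      ultimately show "order b p' = order b q'" using less.prems by simp
    qed
    moreover have "degree p' < degree p" proof -
      have "degree p = degree [:-a,1:] + degree p'" using p' nz by (metis degree_mult_eq pCons_eq_0_iff zero_neq_one)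
      then show ?thesis by simp
    qed
    ultimately obtain c where "c \<noteq> 0" "p' = smult c q'" using less.hyps nz by blast
    then show ?thesis using p' q' by (intro exI[of _ c]) simp
  qed
qed

lemma poly_ident:
  fixes p q :: "complex poly"
  assumes q: "q \<noteq> 0" and g: "g \<noteq> 0"
    and h: "\<forall>z. z \<noteq> 0 \<and> poly q z \<noteq> 0 \<and> poly q (g * z) \<noteq> 0 \<longrightarrow>
            poly p (g * z) / poly q (g * z) = s * (poly p z / poly q z)"
  shows "pcompose p [:0,g:] * q = smult s (p * pcompose q [:0,g:])"
proof (rule ccontr)
  define D where "D = pcompose p [:0,g:] * q - smult s (p * pcompose q [:0,g:])"
  assume "\<not> ?thesis"
  then have D0: "D \<noteq> 0" unfolding D_def by simp
  define B where "B = {0} \<union> {z. poly q z = 0} \<union> {z. poly (pcompose q [:0,g:]) z = 0}"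
  have fB: "finite B" unfolding B_def
    using poly_roots_finite[OF q] poly_roots_finite[OF pcompose_dil_ne0[OF q g]] by simp
  have "\<forall>z. z \<notin> B \<longrightarrow> poly D z = 0"
  proof (intro allI impI)
    fix z assume "z \<notin> B"
    then have z: "z \<noteq> 0" "poly q z \<noteq> 0" "poly q (g * z) \<noteq> 0"
      unfolding B_def by (auto simp: poly_pcompose mult.commute)
    then have "poly p (g * z) / poly q (g * z) = s * (poly p z / poly q z)" using h by blast
    then have "poly p (g * z) * poly q z = s * (poly p z * poly q (g * z))"
      using z by (simp add: field_simps)
    then show "poly D z = 0" unfolding D_def by (simp add: poly_pcompose mult.commute)
  qed
  then have "UNIV \<subseteq> B \<union> {z. poly D z = 0}" by blast
  moreover have "finite (B \<union> {z. poly D z = 0})" using fB poly_roots_finite[OF D0] by simp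
  ultimately have "finite (UNIV :: complex set)" using finite_subset by blast
  then show False using infinite_UNIV_char_0 by blast
qed

lemma order_monom1: "order b (monom (1::complex) n) = (if b = 0 then n else 0)"
proof (cases "b = 0")
  case True then show ?thesis by simp
next
  case False
  then have "poly (monom (1::complex) n) b \<noteq> 0" by (simp add: poly_monom)
  then show ?thesis using False order_0I by simp
qed

theorem mainTheorem8:
  fixes G :: "complex set" and \<sigma> :: "complex \<Rightarrow> complex" and p q :: "complex poly"
  assumes "subgroup_Cstar G"
    and "accumulation_property G"
    and "endo_hom G \<sigma>"
    and "q \<noteq> 0" and "p \<noteq> 0"
    and "\<forall>\<gamma>\<in>G. \<forall>z. z \<noteq> 0 \<and> poly q z \<noteq> 0 \<and> poly q (\<gamma> * z) \<noteq> 0 \<longrightarrow>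
            rat_eval p q (\<gamma> * z) = \<sigma> \<gamma> * rat_eval p q z"
  shows "\<exists>c::complex. \<exists>n::int. c \<noteq> 0 \<and>
           (\<forall>z. z \<noteq> 0 \<and> poly q z \<noteq> 0 \<longrightarrow> rat_eval p q z = c * z powi n)"
proof -
  have G0: "0 \<notin> G" and G1: "1 \<in> G" and Gm: "\<And>x y. x \<in> G \<Longrightarrow> y \<in> G \<Longrightarrow> x * y \<in> G"
    and Gi: "\<And>x. x \<in> G \<Longrightarrow> inverse x \<in> G"
    using assms(1) unfolding subgroup_Cstar_def by auto
  have sG: "\<And>x. x \<in> G \<Longrightarrow> \<sigma> x \<in> G" using assms(3) unfolding endo_hom_def by auto
  have inv: "order (g * a) p + order a q = order a p + order (g * a) q" if gG: "g \<in> G" for g a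
  proof -
    have g0: "g \<noteq> 0" using gG G0 by auto
    have s0: "\<sigma> g \<noteq> 0" using sG[OF gG] G0 by auto
    have id: "pcompose p [:0,g:] * q = smult (\<sigma> g) (p * pcompose q [:0,g:])"
      by (rule poly_ident[OF assms(4) g0]) (use assms(6) gG in \<open>auto simp: rat_eval_def\<close>)
    have n1: "pcompose p [:0,g:] \<noteq> 0" "pcompose q [:0,g:] \<noteq> 0"
      using pcompose_dil_ne0 g0 assms(4,5) by auto
    have "order a (pcompose p [:0,g:] * q) = order (g * a) p + order a q"
      using order_mult[of "pcompose p [:0,g:]" q a] n1 assms(4) order_dil[OF assms(5) g0] by simp
    moreover have "order a (smult (\<sigma> g) (p * pcompose q [:0,g:])) = order a p + order (g * a) q"
      using order_smult[OF s0] order_mult[of p "pcompose q [:0,g:]" a] n1 assms(5) order_dil[OF assms(4) g0] by simp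
    ultimately show ?thesis using id by simp
  qed
  define S where "S = {a. a \<noteq> 0 \<and> order a p \<noteq> order a q}"
  have fS: "finite S"
  proof -
    have "S \<subseteq> {a. poly p a = 0} \<union> {a. poly q a = 0}"
      proof
      fix a assume "a \<in> S"
      then have "order a p \<noteq> 0 \<or> order a q \<noteq> 0" unfolding S_def by auto
      then show "a \<in> {a. poly p a = 0} \<union> {a. poly q a = 0}" using order_root by blast
    qed
    then show ?thesis using poly_roots_finite[OF assms(4)] poly_roots_finite[OF assms(5)]
      by (simp add: finite_subset)
  qed
  have clos: "g * a \<in> S" if "g \<in> G" "a \<in> S" for g a
  proof -
    have "g \<noteq> 0" using that G0 by auto
    then show ?thesis using that inv[OF that(1), of a] unfolding S_def by auto
  qed
  have Sempty: "S = {}"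
  proof (rule ccontr)
    assume "S \<noteq> {}"
    then obtain a where aS: "a \<in> S" by blast
    then have a0: "a \<noteq> 0" unfolding S_def by auto
    show False
    proof (cases "\<exists>q0\<in>G. norm q0 \<noteq> 1")
      case True
      then obtain q0 where q0: "q0 \<in> G" "norm q0 \<noteq> 1" by blast
      obtain r where r: "r \<in> G" "norm r > 1"
      proof (cases "norm q0 > 1")
        case True then show ?thesis using that q0 by blast
      next
        case False
        then have "norm q0 < 1" "q0 \<noteq> 0" using q0 G0 by auto
        then have "norm (inverse q0) > 1" by (simp add: norm_inverse one_less_inverse)
        then show ?thesis using that Gi[OF q0(1)] by blast
      qed
      have rp: "r ^ k \<in> G" for k by (induct k) (use G1 Gm r(1) in auto)
      define f where "f k = r ^ k * a" for k
      have "range f \<subseteq> S" unfolding f_def using clos rp aS by auto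
      then have "finite (range f)" using fS finite_subset by blast
      moreover have "inj f"
      proof (rule injI)
        fix i j assume "f i = f j"
        then have "norm r ^ i * norm a = norm r ^ j * norm a"
          unfolding f_def by (metis norm_mult norm_power)
        then have "norm r ^ i = norm r ^ j" using a0 by simp
        then show "i = j" using r(2) power_inject_exp by blast
      qed
      ultimately have "finite (UNIV :: nat set)" using finite_imageD by blast
      then show False by simp
    next
      case False
      then obtain g :: "nat \<Rightarrow> complex" where g: "\<And>n. g n \<in> G" "\<And>n. g n \<noteq> 1" "g \<longlonglongrightarrow> 1"
        using assms(2) unfolding accumulation_property_def by blast
      have lim: "(\<lambda>n. g n * a) \<longlonglongrightarrow> a" using tendsto_mult_right[OF g(3), of a] by simp
      define T where "T = S - {a}"
      have "closed T" unfolding T_def using fS by (simp add: finite_imp_closed)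
      then have "open (- T)" by auto
      moreover have "a \<in> - T" unfolding T_def by auto
      ultimately have "eventually (\<lambda>n. g n * a \<in> - T) sequentially"
        using lim topological_tendstoD by blast
      then obtain N where N: "g N * a \<in> - T" unfolding eventually_sequentially by blast
      have "g N * a \<in> S" using clos g(1) aS by blast
      moreover have "g N * a \<noteq> a" using g(2)[of N] a0 by simp
      ultimately show False using N unfolding T_def by auto
    qed
  qed
  then have eqo: "order a p = order a q" if "a \<noteq> 0" for a using that unfolding S_def by auto
  define k where "k = order 0 p"
  define l where "l = order 0 q"
  define P where "P = p * monom 1 l"
  define Q where "Q = q * monom 1 k"
  have P0: "P \<noteq> 0" and Q0: "Q \<noteq> 0" unfolding P_def Q_def using assms(4,5) by auto
  have "\<forall>b. order b P = order b Q"
  proof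
    fix b
    have "order b P = order b p + order b (monom 1 l)"
      unfolding P_def using P0 P_def order_mult by metis
    moreover have "order b Q = order b q + order b (monom 1 k)"
      unfolding Q_def using Q0 Q_def order_mult by metis
    ultimately show "order b P = order b Q"
      using eqo[of b] unfolding order_monom1 k_def l_def by (cases "b = 0") auto
  qed
  then obtain c where c: "c \<noteq> 0" "P = smult c Q" using same_order_assoc P0 Q0 by blast
  show ?thesis
  proof (intro exI[of _ c] exI[of _ "int k - int l"] conjI allI impI)
    show "c \<noteq> 0" by fact
    fix z :: complex assume z: "z \<noteq> 0 \<and> poly q z \<noteq> 0"
    have "poly P z = poly (smult c Q) z" using c by simp
    then have "poly p z * z ^ l = c * (poly q z * z ^ k)"
      unfolding P_def Q_def by (simp add: poly_monom)
    then have "poly p z / poly q z = c * (z ^ k / z ^ l)"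
      using z by (simp add: field_simps)
    also have "\<dots> = c * z powi (int k - int l)"
      using z by (simp add: power_int_diff)
    finally show "rat_eval p q z = c * z powi (int k - int l)" unfolding rat_eval_def .
  qed
qed

end
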